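(* Let $\mathcal{Y}\subset\mathbb{R}$ be finite, $\mathcal{D}\subset\mathbb{R}$ finite, $p_D$ a zero-mean distribution on $\mathcal{D}$ giving positive probability to at least two elements, $\epsilon>0$, and let $\mathbf{D}_i$ be a row vector of length $n$ with i.i.d. entries distributed according to $p_D$. There exist a constant $c$ and a constant $\tilde{p}<1$, both independent of $\mathbf{y},\mathbf{y}'$ (and of $n$), such that for all sufficiently large $n$, for any $\mathbf{y},\mathbf{y}'\in\mathcal{Y}^n$ differing in $t\ge1$ components, $$\Pr\{Q_n(\mathbf{D}_i\mathbf{y})=Q_n(\mathbf{D}_i\mathbf{y}')\}\le\min\Big(\tilde{p},\frac{c}{\sqrt{t}}\Big).$$
   Context: $Q_n$ is the scalar quantizer that uniformly quantizes the interval $(-n^{0.5+\epsilon},n^{0.5+\epsilon})$ with step size $\Delta_n=2n^{-\epsilon}$, values outside this interval being mapped to the quantization level farthest from the origin on their side. *)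

theory Defs
  imports "HOL-Probability.Probability"
begin

text \<open>The scalar quantizer Q_n (with parameter eps): the interval (-L, L), L = n powr (1/2 + eps),
  is divided uniformly into cells of width Delta = 2 * n powr (-eps) starting at -L
  (the last cell is truncated at L if 2L/Delta is not an integer); each cell is mapped to its
  midpoint.\<close>

definition Q_len :: "nat \<Rightarrow> real \<Rightarrow> real" where
  "Q_len n eps = real n powr (1/2 + eps)"

definition Q_step :: "nat \<Rightarrow> real \<Rightarrow> real" where
  "Q_step n eps = 2 * real n powr (- eps)"

definition Q_cells :: "nat \<Rightarrow> real \<Rightarrow> int" where
  "Q_cells n eps = \<lceil>2 * Q_len n eps / Q_step n eps\<rceil>"

definition Q_index :: "nat \<Rightarrow> real \<Rightarrow> real \<Rightarrow> int" where
  "Q_index n eps x =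
     max 0 (min (Q_cells n eps - 1) \<lfloor>(x + Q_len n eps) / Q_step n eps\<rfloor>)"

definition Q :: "nat \<Rightarrow> real \<Rightarrow> real \<Rightarrow> real" where
  "Q n eps x = - Q_len n eps + Q_step n eps / 2 + Q_step n eps * real_of_int (Q_index n eps x)"

end

theory Submission
  imports Defs "HOL-Real_Asymp.Real_Asymp"
begin

lemma prob_bind_le:
  fixes M :: "'a pmf" and f :: "'a \<Rightarrow> 'b pmf"
  assumes "\<And>x. x \<in> set_pmf M \<Longrightarrow> measure_pmf.prob (f x) A \<le> g x"
    and "integrable M g"
  shows "measure_pmf.prob (bind_pmf M f) A \<le> measure_pmf.expectation M g"
proof -
  have g0: "AE x in M. 0 \<le> g x"
    using assms(1) by (intro AE_pmfI) (meson measure_nonneg order_trans)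
  have "emeasure (bind_pmf M f) A = (\<integral>\<^sup>+x. emeasure (f x) A \<partial>M)" by simp
  also have "\<dots> \<le> (\<integral>\<^sup>+x. ennreal (g x) \<partial>M)"
    using assms(1) by (intro nn_integral_mono_AE AE_pmfI)
      (simp add: measure_pmf.emeasure_eq_measure ennreal_leI)
  also have "\<dots> = ennreal (measure_pmf.expectation M g)"
    using assms(2) g0 by (rule nn_integral_eq_integral)
  finally have "emeasure (bind_pmf M f) A \<le> ennreal (measure_pmf.expectation M g)" .
  moreover have "0 \<le> measure_pmf.expectation M g" using g0 by (simp add: integral_nonneg_AE)
  ultimately show ?thesis
    by (simp add: measure_pmf.emeasure_eq_measure ennreal_leI)
qed

lemma central_rec: "real ((2*Suc k) choose (Suc k)) = real ((2*k) choose k) * 2 * (2*k+1) / (k+1)"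
proof -
  have e1: "Suc (2*k) * ((2*k) choose k) = (Suc (2*k) choose Suc k) * Suc k"
    by (rule Suc_times_binomial_eq)
  have e2: "Suc (2*k) choose Suc k = Suc (2*k) choose k"
    using binomial_symmetric[of "Suc k" "Suc (2*k)"] by simp
  have e3: "(2*Suc k) choose (Suc k) = (Suc (2*k) choose k) + (Suc (2*k) choose Suc k)"
  proof -
    have "2*Suc k = Suc (Suc (2*k))" by simp
    then show ?thesis by (simp only:) (rule binomial_Suc_Suc)
  qed
  have r1: "real ((2*Suc k) choose (Suc k)) = 2 * real (Suc (2*k) choose Suc k)"
    using e2 e3 by simp
  have r2: "real (Suc (2*k) choose Suc k) * (real k+1) = (2*real k+1) * real((2*k) choose k)"
    using arg_cong[OF e1, of real] by (simp only: of_nat_mult of_nat_Suc) (simp add: algebra_simps)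
  have "real (Suc (2*k) choose Suc k) = (2*real k+1) * real((2*k) choose k) / (real k + 1)"
    using r2 by (simp add: eq_divide_eq)
  then show ?thesis using r1 by (simp add: field_simps)
qed

lemma central_sq: "(real ((2*k) choose k) / 4^k)^2 * (2*k+1) \<le> 1"
proof (induction k)
  case 0 then show ?case by simp
next
  case (Suc k)
  define a where "a = real ((2*k) choose k) / 4^k"
  have r: "real (2*k+1) = 2*real k+1" "real(k+1) = real k+1" "real(2*k+2) = 2*real k + 2" by simp_all
  have h: "real ((2*Suc k) choose (Suc k)) / 4^Suc k = a * (2*k+1) / (2*k+2)"
  proof -
    have aux: "c*2*(2*x+1)/(x+1)/(4*q) = c/q*(2*x+1)/(2*x+2)"
      if "x \<ge> 0" "q > 0" for c x q :: real
    proof -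
      have "x+1 \<noteq> 0" "2*x+2 \<noteq> 0" "q \<noteq> 0" using that by auto
      have e1: "c*2*(2*x+1)/(x+1)/(4*q) = (c*2*(2*x+1)) / ((x+1)*(4*q))" by simp
      have e2: "c/q*(2*x+1)/(2*x+2) = (c*(2*x+1))/(q*(2*x+2))" by simp
      have "(x+1)*(4*q) \<noteq> 0" "q*(2*x+2) \<noteq> 0" using that by auto
      then show ?thesis unfolding e1 e2 by (simp add: frac_eq_eq algebra_simps)
    qed
    have f: "(4::real)^Suc k = 4 * 4^k" by simp
    show ?thesis unfolding a_def central_rec f r by (rule aux) auto
  qed
  have g: "(a*(2*x+1)/(2*x+2))^2 * (2*(1+x)+1) = (a^2*(2*x+1)) * ((2*x+1)*(2*x+3)/(2*x+2)^2)"
    if "x \<ge> 0" for x :: real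
  proof -
    have "2*x+2 \<noteq> 0" using that by simp
    then show ?thesis by (simp add: field_simps power2_eq_square)
  qed
  have "(real ((2*Suc k) choose (Suc k)) / 4^Suc k)^2 * (2*real (Suc k)+1)
     = (a^2 * (2*real k+1)) * ((2*real k+1)*(2*real k+3)/(2*real k+2)^2)"
    unfolding h of_nat_Suc r by (rule g) simp
  also have "\<dots> \<le> 1 * 1"
  proof (rule mult_mono)
    show "a\<^sup>2 * (2 * real k + 1) \<le> 1" using Suc.IH by (simp add: a_def add.commute)
    have p: "(2 * real k + 2)\<^sup>2 > 0" by simp
    have "(2 * real k + 1) * (2 * real k + 3) \<le> (2 * real k + 2)\<^sup>2"
      by (simp add: power2_eq_square algebra_simps)
    then show "(2 * real k + 1) * (2 * real k + 3) / (2 * real k + 2)\<^sup>2 \<le> 1"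
      using p by (simp add: divide_le_eq)
  qed auto
  finally show ?case by simp
qed

lemma sq_helper:
  fixes x c d :: real
  assumes "x^2 * c \<le> 1" "d \<le> c" "d > 0" "x \<ge> 0"
  shows "x \<le> 1 / sqrt d"
proof -
  have "x^2 * d \<le> x^2 * c" using assms by (intro mult_left_mono) auto
  then have "x^2 \<le> 1/d" using assms by (simp add: pos_le_divide_eq)
  then have "x \<le> sqrt (1/d)" by (rule real_le_rsqrt)
  then show ?thesis by (simp add: real_sqrt_divide)
qed

lemma binom_half_le: "pmf (binomial_pmf m (1/2)) j \<le> 1 / sqrt (real m + 1)"
proof (cases "j \<le> m")
  case False then show ?thesis by (simp add: pmf_binomial binomial_eq_0)
next
  case True
  have "pmf (binomial_pmf m (1/2)) j = real (m choose j) / 2^m"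
  proof -
    have "(1/2::real)^j * (1 - 1/2)^(m-j) = (1/2)^(j + (m-j))"
      by (simp add: power_add)
    also have "j + (m-j) = m" using True by simp
    finally show ?thesis using True by (simp add: pmf_binomial power_one_over)
  qed
  also have "\<dots> \<le> real (m choose (m div 2)) / 2^m"
    by (intro divide_right_mono) (simp_all add: binomial_maximum)
  also have "\<dots> \<le> 1 / sqrt (real m + 1)"
  proof (cases "even m")
    case True
    then obtain k where m: "m = 2*k" by blast
    have "real ((2*k) choose k) / 4^k \<le> 1 / sqrt (2*k+1)"
      by (rule sq_helper[OF central_sq[of k]]) auto
    moreover have "(2::real)^(2*k) = 4^k" by (simp add: power_mult)
    ultimately show ?thesis using m by (simp add: ac_simps)
  next
    case False
    then obtain k where m: "m = 2*k+1" using oddE by blast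
    have A: "real ((2*Suc k) choose Suc k) / 4^Suc k \<le> 1 / sqrt (real m + 1)"
      by (rule sq_helper[OF central_sq[of "Suc k"]]) (auto simp: m)
    have B0: "(2*Suc k) choose Suc k = (Suc (2*k) choose k) + (Suc (2*k) choose Suc k)"
    proof -
      have "2*Suc k = Suc (Suc (2*k))" by simp
      then show ?thesis by (simp only:) (rule binomial_Suc_Suc)
    qed
    have B: "(2*Suc k) choose Suc k = 2 * (Suc (2*k) choose k)"
      using binomial_symmetric[of "Suc k" "Suc (2*k)"] B0 by simp
    have C: "(4::real)^Suc k = 2 * 2^m" using m by (simp add: power_mult)
    have "m div 2 = k" using m by simp
    moreover have "real ((2*Suc k) choose Suc k) / 4^Suc k = real (Suc (2*k) choose k) / 2^m"
      unfolding B C by simp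
    ultimately show ?thesis using A m by (simp del: binomial_Suc_Suc)
  qed
  finally show ?thesis .
qed

lemma Q_eq_imp:
  assumes n: "n > 0" and eq: "Q n eps u = Q n eps v"
  shows "\<bar>u - v\<bar> < Q_step n eps \<or> \<bar>u\<bar> \<ge> Q_len n eps \<or> \<bar>v\<bar> \<ge> Q_len n eps"
proof (rule ccontr)
  define L where "L = Q_len n eps"
  define S where "S = Q_step n eps"
  assume "\<not> ?thesis"
  then have hu: "\<bar>u\<bar> < L" "\<bar>v\<bar> < L" and nd: "\<bar>u - v\<bar> \<ge> S"
    unfolding L_def S_def by auto
  have S0: "S > 0" using n unfolding S_def Q_step_def by simp
  have idx: "Q_index n eps u = Q_index n eps v"
    using eq S0 unfolding Q_def S_def[symmetric] by simp
  have fl: "Q_index n eps x = \<lfloor>(x + L)/S\<rfloor>" if "\<bar>x\<bar> < L" for x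
  proof -
    have "0 \<le> (x + L)/S" using that S0 by simp
    then have a: "0 \<le> \<lfloor>(x + L)/S\<rfloor>" by simp
    have "(x + L)/S < 2 * L / S" using that S0 by (simp add: divide_strict_right_mono)
    also have "\<dots> \<le> of_int (Q_cells n eps)"
      unfolding Q_cells_def L_def S_def by simp
    finally have "\<lfloor>(x + L)/S\<rfloor> < Q_cells n eps" by (simp add: floor_less_iff)
    then show ?thesis using a unfolding Q_index_def L_def S_def by simp
  qed
  have "\<lfloor>(u + L)/S\<rfloor> = \<lfloor>(v + L)/S\<rfloor>" using idx fl hu by simp
  then have "\<bar>(u + L)/S - (v + L)/S\<bar> < 1" by linarith
  moreover have "(u + L)/S - (v + L)/S = (u - v)/S" by (simp add: add_divide_distrib diff_divide_distrib)
  ultimately have "\<bar>(u - v)/S\<bar> < 1" by simp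
  then have "\<bar>u - v\<bar> < S" using S0 by (simp add: abs_divide)
  then show False using nd by simp
qed

lemma tail_bound:
  fixes pD :: "real pmf" and y :: "nat \<Rightarrow> real" and K lam :: real
  assumes n: "n > 0" and K: "K > 0"
    and bd: "\<And>d i. d \<in> set_pmf pD \<Longrightarrow> i < n \<Longrightarrow> \<bar>d * y i\<bar> \<le> K"
    and mean: "measure_pmf.expectation pD (\<lambda>x. x) = 0"
    and lam: "lam \<ge> 0"
  shows "measure_pmf.prob (Pi_pmf {..<n} 0 (\<lambda>_. pD)) {d. \<bar>\<Sum>i<n. d i * y i\<bar> \<ge> lam}
           \<le> 2 * exp (-2 * lam^2 / (n * (2*K)^2))"
proof -
  define P where "P = Pi_pmf {..<n} 0 (\<lambda>_. pD)"
  have comp: "map_pmf (\<lambda>f. f i) P = pD" if "i < n" for i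
    unfolding P_def using that by (subst Pi_pmf_component) auto
  have ex0: "(\<Sum>i<n. measure_pmf.expectation P (\<lambda>d. d i * y i)) = 0"
  proof (intro sum.neutral ballI)
    fix i assume "i \<in> {..<n}"
    then have "measure_pmf.expectation P (\<lambda>d. d i * y i)
       = measure_pmf.expectation (map_pmf (\<lambda>f. f i) P) (\<lambda>x. x * y i)"
      by simp
    also have "\<dots> = measure_pmf.expectation pD (\<lambda>x. x * y i)"
      using \<open>i \<in> {..<n}\<close> comp by simp
    also have "\<dots> = 0" using mean by simp
    finally show "measure_pmf.expectation P (\<lambda>d. d i * y i) = 0" .
  qed
  interpret H: Hoeffding_ineq "measure_pmf P" "{..<n}" "\<lambda>i d. d i * y i" "\<lambda>_. -K" "\<lambda>_. K" 0
  proof unfold_locales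
    show "prob_space.indep_vars (measure_pmf P) (\<lambda>_. borel) (\<lambda>i d. d i * y i) {..<n}"
      unfolding P_def
      by (intro prob_space.indep_vars_compose2[OF _ indep_vars_Pi_pmf, where Y = "\<lambda>i v. v * y i"])
         (auto simp: measure_pmf.prob_space_axioms)
    show "AE x in measure_pmf P. x i * y i \<in> {- K..K}" if "i \<in> {..<n}" for i
    proof (rule AE_pmfI)
      fix x assume "x \<in> set_pmf P"
      then have "x i \<in> set_pmf pD" using that unfolding P_def
        by (auto simp: set_Pi_pmf PiE_dflt_def)
      then show "x i * y i \<in> {- K..K}" using bd[of "x i" i] that by auto
    qed
    show "0 \<equiv> \<Sum>i<n. measure_pmf.expectation P (\<lambda>d. d i * y i)"
      using ex0 by simp
  qed simp
  have s: "(\<Sum>i<n. (K - - K)\<^sup>2) = n * (2*K)^2" by simp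
  have "measure_pmf.prob P {x \<in> space (measure_pmf P). \<bar>(\<Sum>i<n. x i * y i) - 0\<bar> \<ge> lam}
        \<le> 2 * exp (- 2 * lam\<^sup>2 / (\<Sum>i<n. (K - - K)\<^sup>2))"
    by (rule H.Hoeffding_ineq_abs_ge) (use lam K n in auto)
  then show ?thesis unfolding s P_def by simp
qed

definition coinU :: "real \<Rightarrow> real \<Rightarrow> real pmf" where
  "coinU a b = map_pmf (\<lambda>s. if s then b else a) (bernoulli_pmf (1/2))"

definition qq :: "real \<Rightarrow> real \<Rightarrow> bool \<times> real \<Rightarrow> real pmf" where
  "qq a b = (\<lambda>(c,d). if c then coinU a b else return_pmf d)"

lemma pmf_coinU:
  assumes "a \<noteq> b"
  shows "pmf (coinU a b) x = (if x = a \<or> x = b then 1/2 else 0)"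
proof -
  have "pmf (coinU a b) x = measure_pmf.prob (bernoulli_pmf (1/2)) ((\<lambda>s. if s then b else a) -` {x})"
    unfolding coinU_def by (rule pmf_map)
  also have "(\<lambda>s. if s then b else a) -` {x} = (if x = b then {True} else {}) \<union> (if x = a then {False} else {})"
    using assms by (auto split: if_splits)
  also have "measure_pmf.prob (bernoulli_pmf (1/2)) \<dots> = (if x = a \<or> x = b then 1/2 else 0)"
    using assms by (auto simp: measure_pmf_single)
  finally show ?thesis .
qed

lemma mixture:
  fixes pD :: "real pmf" and a b :: real
  assumes ab: "a \<in> set_pmf pD" "b \<in> set_pmf pD" "a \<noteq> b" and fin: "finite (set_pmf pD)"
  defines "r \<equiv> min (pmf pD a) (pmf pD b)"
  shows "0 < r" "r \<le> 1/2"
    "\<exists>R. pD = bind_pmf (pair_pmf (bernoulli_pmf r) R) (qq a b)"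
proof -
  show r0: "0 < r" unfolding r_def using ab by (simp add: pmf_positive)
  have "pmf pD a + pmf pD b = measure_pmf.prob pD {a, b}"
    using ab by (simp add: measure_measure_pmf_finite)
  also have "\<dots> \<le> 1" by simp
  finally have pab: "pmf pD a + pmf pD b \<le> 1" .
  then show r2: "r \<le> 1/2" unfolding r_def by linarith
  define f where "f x = (pmf pD x - r/2 * indicator {a,b} x) / (1 - r)" for x
  have f0: "0 \<le> f x" for x
  proof -
    have "r/2 * indicator {a,b} x \<le> pmf pD x"
      using r0 unfolding r_def by (auto simp: indicator_def)
    then show ?thesis unfolding f_def using r2 by simp
  qed
  have fout: "f x = 0" if "x \<notin> set_pmf pD" for x
    using that ab unfolding f_def by (auto simp: set_pmf_eq indicator_def)
  have "(\<Sum>x\<in>set_pmf pD. f x) = ((\<Sum>x\<in>set_pmf pD. pmf pD x) - (\<Sum>x\<in>set_pmf pD. r/2 * indicator {a,b} x)) / (1 - r)"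
    unfolding f_def by (simp only: sum_divide_distrib[symmetric] sum_subtractf)
  also have "(\<Sum>x\<in>set_pmf pD. pmf pD x) = 1" using fin by (rule sum_pmf_eq_1) simp
  also have "(\<Sum>x\<in>set_pmf pD. r/2 * indicator {a,b} x) = (\<Sum>x\<in>{a,b}. r/2)"
    using fin ab by (intro sum.mono_neutral_cong_right) (auto simp: indicator_def)
  also have "\<dots> = r" using ab by simp
  finally have fs: "(\<Sum>x\<in>set_pmf pD. f x) = 1" using r2 by simp
  have prob: "(\<integral>\<^sup>+x. f x \<partial>count_space UNIV) = 1"
    using fin fout fs by (subst nn_integral_count_space'[of "set_pmf pD"]) (auto simp: sum_ennreal f0)
  define R where "R = embed_pmf f"
  have pR: "pmf R x = f x" for x unfolding R_def using f0 prob by (rule pmf_embed_pmf)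
  have "bind_pmf (pair_pmf (bernoulli_pmf r) R) (qq a b)
     = bind_pmf (bernoulli_pmf r) (\<lambda>c. if c then coinU a b else R)"
  proof -
    have "bind_pmf (pair_pmf (bernoulli_pmf r) R) (qq a b) =
      bind_pmf (bernoulli_pmf r) (\<lambda>x. bind_pmf R (\<lambda>d. if x then coinU a b else return_pmf d))"
      unfolding pair_pmf_def qq_def by (simp add: bind_assoc_pmf bind_return_pmf)
    also have "\<dots> = bind_pmf (bernoulli_pmf r) (\<lambda>c. if c then coinU a b else R)"
    proof (intro bind_pmf_cong refl)
      fix x :: bool
      show "bind_pmf R (\<lambda>d. if x then coinU a b else return_pmf d) = (if x then coinU a b else R)"
        by (cases x) (simp_all add: bind_return_pmf')
    qed
    finally show ?thesis .
  qed
  also have "\<dots> = pD"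
  proof (rule pmf_eqI)
    fix x
    have "pmf (bind_pmf (bernoulli_pmf r) (\<lambda>c. if c then coinU a b else R)) x
       = pmf (coinU a b) x * r + pmf R x * (1 - r)"
      using r0 r2 by (simp add: pmf_bind)
    also have "\<dots> = pmf pD x"
      using r2 ab(3) unfolding pR f_def pmf_coinU[OF ab(3)] by (auto simp: indicator_def)
    finally show "pmf (bind_pmf (bernoulli_pmf r) (\<lambda>c. if c then coinU a b else R)) x = pmf pD x" .
  qed
  finally show "\<exists>R. pD = bind_pmf (pair_pmf (bernoulli_pmf r) R) (qq a b)" by metis
qed

lemma Pi_pmf_map_dep:
  assumes "finite A"
  shows "Pi_pmf A dflt (\<lambda>x. map_pmf (f x) (g x))
       = map_pmf (\<lambda>h x. if x \<in> A then f x (h x) else dflt) (Pi_pmf A dflt' g)"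
proof -
  have "Pi_pmf A dflt (\<lambda>x. map_pmf (f x) (g x))
      = Pi_pmf A dflt (\<lambda>x. bind_pmf (g x) (\<lambda>y. return_pmf (f x y)))"
    by (simp add: map_pmf_def)
  also have "\<dots> = bind_pmf (Pi_pmf A dflt' g) (\<lambda>h. Pi_pmf A dflt (\<lambda>x. return_pmf (f x (h x))))"
    using assms by (rule Pi_pmf_bind[where q = "\<lambda>x y. return_pmf (f x y)"])
  also have "\<dots> = bind_pmf (Pi_pmf A dflt' g) (\<lambda>h. return_pmf (\<lambda>x. if x \<in> A then f x (h x) else dflt))"
    using assms by simp
  also have "\<dots> = map_pmf (\<lambda>h x. if x \<in> A then f x (h x) else dflt) (Pi_pmf A dflt' g)"
    by (simp add: map_pmf_def)
  finally show ?thesis .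
qed

lemma binom_event_le:
  fixes A C \<Delta> :: real
  assumes gap: "2*\<Delta> \<le> \<bar>C\<bar>"
  shows "measure_pmf.prob (binomial_pmf K (1/2)) {k. \<bar>A + C * real k\<bar> < \<Delta>} \<le> 1 / sqrt (real K + 1)"
proof (cases "{k. \<bar>A + C * real k\<bar> < \<Delta>} = {}")
  case True then show ?thesis by simp
next
  case False
  then obtain k0 where k0: "\<bar>A + C * real k0\<bar> < \<Delta>" by auto
  have sub: "{k. \<bar>A + C * real k\<bar> < \<Delta>} \<subseteq> {k0}"
  proof
    fix k assume "k \<in> {k. \<bar>A + C * real k\<bar> < \<Delta>}"
    then have k: "\<bar>A + C * real k\<bar> < \<Delta>" by simp
    have "\<bar>C * (real k - real k0)\<bar> < 2 * \<Delta>" using k k0 by (simp add: algebra_simps abs_if split: if_splits)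
    then have lt: "\<bar>C\<bar> * \<bar>real k - real k0\<bar> < \<bar>C\<bar> * 1" using gap by (simp add: abs_mult)
    then have "\<bar>real k - real k0\<bar> < 1"
      by (metis abs_ge_zero mult_less_cancel_left_pos mult_zero_left order_less_irrefl
          order_le_less)
    then show "k \<in> {k0}" by simp
  qed
  have "measure_pmf.prob (binomial_pmf K (1/2)) {k. \<bar>A + C * real k\<bar> < \<Delta>}
      \<le> measure_pmf.prob (binomial_pmf K (1/2)) {k0}"
    using sub by (rule measure_pmf.finite_measure_mono) simp
  also have "\<dots> = pmf (binomial_pmf K (1/2)) k0" by (simp add: measure_pmf_single)
  also have "\<dots> \<le> 1 / sqrt (real K + 1)" by (rule binom_half_le)
  finally show ?thesis .
qed


lemma inner_bound:
  fixes \<omega> :: "nat \<Rightarrow> bool \<times> real" and z :: "nat \<Rightarrow> real"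
  assumes S: "S \<subseteq> {..<n}" and zS: "\<And>i. i \<in> S \<Longrightarrow> z i = w"
    and gap: "2*\<Delta> \<le> \<bar>(b-a)*w\<bar>"
  shows "measure_pmf.prob (Pi_pmf {..<n} 0 (\<lambda>i. qq a b (\<omega> i))) {d. \<bar>\<Sum>i<n. d i * z i\<bar> < \<Delta>}
         \<le> 1 / sqrt (real (card {i\<in>S. fst (\<omega> i)}) + 1)"
proof -
  define G where "G = (\<lambda>(c::bool,d::real) (s::bool). if c then (if s then b else a) else d)"
  have qqG: "qq a b x = map_pmf (G x) (bernoulli_pmf (1/2))" for x
    by (cases x) (simp add: qq_def G_def coinU_def)
  define J where "J = {i\<in>S. fst (\<omega> i)}"
  define A where "A = {..<n} - J"
  define B where "B = bernoulli_pmf (1/2)"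
  define PA where "PA = Pi_pmf A False (\<lambda>_. B)"
  define PJ where "PJ = Pi_pmf J False (\<lambda>_. B)"
  define \<beta> where "\<beta> = 1 / sqrt (real (card J) + 1)"
  have J: "J \<subseteq> {..<n}" "finite J" using S unfolding J_def by (auto intro: finite_subset)
  have AJ: "{..<n} = A \<union> J" "A \<inter> J = {}" "finite A" using J unfolding A_def by auto
  have e1: "Pi_pmf {..<n} 0 (\<lambda>i. qq a b (\<omega> i))
      = map_pmf (\<lambda>h x. if x \<in> {..<n} then G (\<omega> x) (h x) else 0) (Pi_pmf {..<n} False (\<lambda>_. B))"
    unfolding qqG B_def by (rule Pi_pmf_map_dep) simp
  have e2: "Pi_pmf {..<n} False (\<lambda>_. B)
      = map_pmf (\<lambda>(f,g) x. if x \<in> A then f x else g x) (pair_pmf PA PJ)"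
    unfolding PA_def PJ_def by (subst AJ(1)) (rule Pi_pmf_union; use AJ J in auto)
  have e3: "pair_pmf PA PJ = bind_pmf PA (\<lambda>f. map_pmf (\<lambda>g. (f,g)) PJ)"
    by (simp add: pair_pmf_def map_pmf_def)
  define c0 where "c0 f = (\<Sum>i\<in>A. G (\<omega> i) (f i) * z i) + w * (real (card J) * a)" for f
  have sumeq: "(\<Sum>i<n. (if i \<in> {..<n} then G (\<omega> i) (if i \<in> A then f i else g i) else 0) * z i)
       = c0 f + (b-a)*w * real (card {i\<in>J. g i})" for f g
  proof -
    have "(\<Sum>i<n. (if i \<in> {..<n} then G (\<omega> i) (if i \<in> A then f i else g i) else 0) * z i)
        = (\<Sum>i\<in>A \<union> J. G (\<omega> i) (if i \<in> A then f i else g i) * z i)"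
      using AJ(1) by (intro sum.cong) auto
    also have "\<dots> = (\<Sum>i\<in>A. G (\<omega> i) (if i \<in> A then f i else g i) * z i)
                    + (\<Sum>i\<in>J. G (\<omega> i) (if i \<in> A then f i else g i) * z i)"
      using AJ J by (intro sum.union_disjoint) auto
    also have "(\<Sum>i\<in>A. G (\<omega> i) (if i \<in> A then f i else g i) * z i) = (\<Sum>i\<in>A. G (\<omega> i) (f i) * z i)"
      by (intro sum.cong) auto
    also have "(\<Sum>i\<in>J. G (\<omega> i) (if i \<in> A then f i else g i) * z i)
             = (\<Sum>i\<in>J. w * a + (b-a) * w * (if g i then 1 else 0))"
    proof (intro sum.cong refl)
      fix i assume i: "i \<in> J"
      then have "i \<notin> A" "fst (\<omega> i)" "z i = w" using AJ zS unfolding J_def by auto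
      then show "G (\<omega> i) (if i \<in> A then f i else g i) * z i = w * a + (b-a) * w * (if g i then 1 else 0)"
        unfolding G_def by (cases "\<omega> i") (auto simp: algebra_simps)
    qed
    also have "\<dots> = real (card J) * (w * a) + (b-a)*w * (\<Sum>i\<in>J. if g i then 1 else 0)"
      by (simp add: sum.distrib sum_distrib_left)
    also have "(\<Sum>i\<in>J. if g i then 1 else (0::real)) = real (card {i\<in>J. g i})"
      using J(2) by (simp add: sum.inter_filter[symmetric])
    finally show ?thesis unfolding c0_def by (simp add: algebra_simps)
  qed
  have sumeq': "(\<Sum>i<n. G (\<omega> i) (if i \<in> A then f i else g i) * z i)
       = c0 f + (b-a)*w * real (card {i\<in>J. g i})" for f g
    using sumeq[of f g] by simp
  have "measure_pmf.prob (Pi_pmf {..<n} 0 (\<lambda>i. qq a b (\<omega> i))) {d. \<bar>\<Sum>i<n. d i * z i\<bar> < \<Delta>}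
      = measure_pmf.prob (pair_pmf PA PJ) {(f,g). \<bar>c0 f + (b-a)*w * real (card {i\<in>J. g i})\<bar> < \<Delta>}"
    unfolding e1 e2 by (simp add: vimage_def case_prod_unfold sumeq')
  also have "\<dots> \<le> measure_pmf.expectation PA (\<lambda>_. \<beta>)"
    unfolding e3
  proof (rule prob_bind_le)
    fix f
    have "measure_pmf.prob (map_pmf (\<lambda>g. (f, g)) PJ) {(f,g). \<bar>c0 f + (b-a)*w * real (card {i\<in>J. g i})\<bar> < \<Delta>}
        = measure_pmf.prob (map_pmf (\<lambda>g. card {i\<in>J. g i}) PJ) {k. \<bar>c0 f + (b-a)*w * real k\<bar> < \<Delta>}"
      by (simp add: vimage_def)
    also have "map_pmf (\<lambda>g. card {i\<in>J. g i}) PJ = binomial_pmf (card J) (1/2)"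
      unfolding PJ_def B_def by (rule binomial_pmf_altdef'[symmetric]) (use J in auto)
    also have "measure_pmf.prob (binomial_pmf (card J) (1/2)) {k. \<bar>c0 f + (b-a)*w * real k\<bar> < \<Delta>} \<le> \<beta>"
      unfolding \<beta>_def by (rule binom_event_le) (use gap in simp)
    finally show "measure_pmf.prob (map_pmf (\<lambda>g. (f, g)) PJ) {(f,g). \<bar>c0 f + (b-a)*w * real (card {i\<in>J. g i})\<bar> < \<Delta>} \<le> \<beta>" .
  qed simp
  also have "\<dots> = \<beta>" by simp
  finally show ?thesis unfolding \<beta>_def J_def .
qed


lemma anti_conc:
  fixes z :: "nat \<Rightarrow> real"
  assumes mix: "pD = bind_pmf (pair_pmf (bernoulli_pmf r) R) (qq a b)" and r: "0 \<le> r" "r \<le> 1"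
    and S: "S \<subseteq> {..<n}" and zS: "\<And>i. i \<in> S \<Longrightarrow> z i = w"
    and gap: "2*\<Delta> \<le> \<bar>(b-a)*w\<bar>"
  shows "measure_pmf.prob (Pi_pmf {..<n} 0 (\<lambda>_. pD)) {d. \<bar>\<Sum>i<n. d i * z i\<bar> < \<Delta>}
         \<le> measure_pmf.expectation (binomial_pmf (card S) r) (\<lambda>k. 1 / sqrt (real k + 1))"
proof -
  define X where "X = pair_pmf (bernoulli_pmf r) R"
  define PX where "PX = Pi_pmf {..<n} (False, 0) (\<lambda>_. X)"
  define h where "h = (\<lambda>k::nat. 1 / sqrt (real k + 1))"
  have finS: "finite S" using S by (rule finite_subset) simp
  have e1: "Pi_pmf {..<n} 0 (\<lambda>_. pD) = bind_pmf PX (\<lambda>\<omega>. Pi_pmf {..<n} 0 (\<lambda>i. qq a b (\<omega> i)))"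
    unfolding mix PX_def X_def by (rule Pi_pmf_bind[where q = "\<lambda>_. qq a b"]) simp
  have hb: "h k \<le> 1" "0 \<le> h k" for k unfolding h_def by (auto simp: divide_le_eq)
  have "measure_pmf.prob (Pi_pmf {..<n} 0 (\<lambda>_. pD)) {d. \<bar>\<Sum>i<n. d i * z i\<bar> < \<Delta>}
        \<le> measure_pmf.expectation PX (\<lambda>\<omega>. h (card {i\<in>S. fst (\<omega> i)}))"
    unfolding e1
  proof (rule prob_bind_le)
    fix \<omega> show "measure_pmf.prob (Pi_pmf {..<n} 0 (\<lambda>i. qq a b (\<omega> i))) {d. \<bar>\<Sum>i<n. d i * z i\<bar> < \<Delta>}
       \<le> h (card {i\<in>S. fst (\<omega> i)})"
      unfolding h_def by (rule inner_bound[OF S zS gap])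
  next
    show "integrable (measure_pmf PX) (\<lambda>\<omega>. h (card {i\<in>S. fst (\<omega> i)}))"
      by (rule measure_pmf.integrable_const_bound[where B=1]) (use hb in auto)
  qed
  moreover have bin: "binomial_pmf (card S) r = map_pmf (\<lambda>\<omega>. card {i\<in>S. fst (\<omega> i)}) PX"
  proof -
    have "binomial_pmf (card S) r = map_pmf (\<lambda>f. card {x\<in>S. f x}) (Pi_pmf S False (\<lambda>_. bernoulli_pmf r))"
      by (rule binomial_pmf_altdef') (use finS r in auto)
    also have "Pi_pmf S False (\<lambda>_. bernoulli_pmf r) = Pi_pmf S False (\<lambda>_. map_pmf fst X)"
      unfolding X_def by (simp add: map_fst_pair_pmf)
    also have "\<dots> = map_pmf (\<lambda>h. fst \<circ> h) (Pi_pmf S (False, 0) (\<lambda>_. X))"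
      by (rule Pi_pmf_map) (use finS in auto)
    also have "Pi_pmf S (False, 0) (\<lambda>_. X) = map_pmf (\<lambda>f x. if x \<in> S then f x else (False, 0)) PX"
      unfolding PX_def by (rule Pi_pmf_subset) (use S in auto)
    finally show ?thesis by (simp add: map_pmf_comp cong: conj_cong)
  qed
  ultimately show ?thesis by (simp add: h_def)
qed

lemma binom_exp1:
  fixes r :: real
  assumes r: "0 < r" "r \<le> 1/2" and m: "m \<ge> 1"
  shows "measure_pmf.expectation (binomial_pmf m r) (\<lambda>k. 1 / sqrt (real k + 1)) \<le> 1 - r/4"
proof -
  define M where "M = binomial_pmf m r"
  define g where "g = (\<lambda>k::nat. 1 - (1/4) * indicator {k. 0 < k} k :: real)"
  have hg: "1 / sqrt (real k + 1) \<le> g k" for k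
  proof (cases "k = 0")
    case True then show ?thesis by (simp add: g_def)
  next
    case False
    have "sqrt 2 \<le> sqrt (real k + 1)" using False by simp
    moreover have "4/3 \<le> sqrt (2::real)" by (rule real_le_rsqrt) (simp add: power2_eq_square)
    ultimately have "4/3 \<le> sqrt (real k + 1)" by linarith
    then have "1 / sqrt (real k + 1) \<le> 1 / (4/3)" by (intro divide_left_mono) auto
    then show ?thesis using False by (simp add: g_def)
  qed
  have int1: "integrable M (\<lambda>k. 1 / sqrt (real k + 1))"
    by (rule measure_pmf.integrable_const_bound[where B=1]) (auto simp: divide_le_eq)
  have int2: "integrable M g"
    by (rule measure_pmf.integrable_const_bound[where B=1]) (auto simp: g_def indicator_def)
  have "measure_pmf.expectation M (\<lambda>k. 1 / sqrt (real k + 1)) \<le> measure_pmf.expectation M g"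
    using int1 int2 hg by (intro integral_mono) auto
  also have "measure_pmf.expectation M g = 1 - (1/4) * measure_pmf.prob M {k. 0 < k}"
  proof -
    have ii: "integrable M (\<lambda>k. indicator {k. 0 < k} k / 4 :: real)"
      by (rule measure_pmf.integrable_const_bound[where B=1]) (auto simp: indicator_def)
    show ?thesis
      unfolding g_def using ii by (subst Bochner_Integration.integral_diff) (auto simp: measure_pmf.prob_space)
  qed
  also have "measure_pmf.prob M {k. 0 < k} = 1 - pmf M 0"
  proof -
    have "{k. 0 < k} = UNIV - {0::nat}" by auto
    moreover have "measure_pmf.prob M (UNIV - {0}) = 1 - measure_pmf.prob M {0}"
      using measure_pmf.prob_compl[of "{0::nat}" M] by simp
    ultimately show ?thesis by (simp add: measure_pmf_single)
  qed
  also have "pmf M 0 = (1 - r)^m" using r unfolding M_def by simp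
  also have "(1 - r)^m \<le> (1 - r)^1" using r m by (intro power_decreasing) auto
  finally show ?thesis unfolding M_def by simp
qed

lemma binom_exp2:
  fixes r :: real
  assumes r: "0 < r" "r \<le> 1/2" and m: "m \<ge> 1"
  shows "measure_pmf.expectation (binomial_pmf m r) (\<lambda>k. 1 / sqrt (real k + 1))
           \<le> (2 / r^2 + sqrt (2 / r)) / sqrt m"
proof -
  define M where "M = binomial_pmf m r"
  define t where "t = real m * r / 2"
  have t0: "t > 0" using r m unfolding t_def by simp
  define g where "g = (\<lambda>k::nat. indicator {k. real k \<le> real m * r - t} k + 1 / sqrt t :: real)"
  have hg: "1 / sqrt (real k + 1) \<le> g k" for k
  proof (cases "real k \<le> real m * r - t")
    case True
    have "1 / sqrt (real k + 1) \<le> 1" by (simp add: divide_le_eq)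
    moreover have "0 \<le> 1 / sqrt t" using t0 by simp
    moreover have "g k = 1 + 1 / sqrt t" using True by (simp add: g_def)
    ultimately show ?thesis by linarith
  next
    case False
    then have "t \<le> real k + 1" unfolding t_def by (simp add: algebra_simps)
    then have "1 / sqrt (real k + 1) \<le> 1 / sqrt t" using t0 by (intro divide_left_mono) auto
    then show ?thesis unfolding g_def by (simp add: indicator_def)
  qed
  have int1: "integrable M (\<lambda>k. 1 / sqrt (real k + 1))"
    by (rule measure_pmf.integrable_const_bound[where B=1]) (auto simp: divide_le_eq)
  have int2: "integrable M g"
    by (rule measure_pmf.integrable_const_bound[where B="1 + 1 / sqrt t"]) (use t0 in \<open>auto simp: g_def indicator_def\<close>)
  have "measure_pmf.expectation M (\<lambda>k. 1 / sqrt (real k + 1)) \<le> measure_pmf.expectation M g"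
    using int1 int2 hg by (intro integral_mono) auto
  also have "measure_pmf.expectation M g = measure_pmf.prob M {k. real k \<le> real m * r - t} + 1 / sqrt t"
  proof -
    have ii: "integrable M (indicator {k. real k \<le> real m * r - t} :: nat \<Rightarrow> real)"
      by (rule measure_pmf.integrable_const_bound[where B=1]) (auto simp: indicator_def)
    show ?thesis
      unfolding g_def using ii by (subst Bochner_Integration.integral_add) (auto simp: measure_pmf.prob_space)
  qed
  also have "measure_pmf.prob M {k. real k \<le> real m * r - t} \<le> exp (-2 * t^2 / m)"
    unfolding M_def
    by (rule binomial_distribution.prob_le) (use r m t0 in \<open>auto simp: binomial_distribution_def\<close>)
  also have "exp (-2 * t^2 / m) \<le> 2 / r^2 / sqrt m"
  proof -
    define x where "x = 2 * t^2 / m"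
    have x: "x = real m * r^2 / 2" unfolding x_def t_def using m by (simp add: power2_eq_square field_simps)
    have "real m * r^2 > 0" using r m by simp
    then have x0: "x > 0" using x by simp
    have "1 + x \<le> exp x" by (rule exp_ge_add_one_self)
    then have "exp (-x) \<le> 1 / (1 + x)" using x0 by (simp add: exp_minus field_simps)
    also have "\<dots> \<le> 1 / x" using x0 by (intro divide_left_mono) auto
    also have "1 / x = 2 / r^2 / m" unfolding x using r by (simp add: field_simps)
    also have "\<dots> \<le> 2 / r^2 / sqrt m"
    proof (intro divide_left_mono)
      have "sqrt (real m) \<le> sqrt (real m) * sqrt (real m)" using m by (intro mult_le_cancel_left1[THEN iffD2]) auto
      then show "sqrt (real m) \<le> real m" by simp
    qed (use m r in auto)
    finally show ?thesis unfolding x_def by simp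
  qed
  also have "1 / sqrt t = sqrt (2 / r) / sqrt m"
    unfolding t_def using r m by (simp add: real_sqrt_divide real_sqrt_mult field_simps)
  finally show ?thesis unfolding M_def by (simp add: add_divide_distrib)
qed

theorem lemma4:
  fixes Y D :: "real set" and pD :: "real pmf" and eps :: real
  assumes "finite Y" and "finite D"
    and "set_pmf pD \<subseteq> D"
    and "measure_pmf.expectation pD (\<lambda>x. x) = 0"
    and "card (set_pmf pD) \<ge> 2"
    and "eps > 0"
  shows "\<exists>c p_tilde. p_tilde < 1 \<and> (\<exists>N. \<forall>n\<ge>N. \<forall>y y' :: nat \<Rightarrow> real.
           (\<forall>i<n. y i \<in> Y \<and> y' i \<in> Y) \<longrightarrow>
           card {i. i < n \<and> y i \<noteq> y' i} \<ge> 1 \<longrightarrow>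
           measure_pmf.prob (Pi_pmf {..<n} 0 (\<lambda>_. pD))
             {d. Q n eps (\<Sum>i<n. d i * y i) = Q n eps (\<Sum>i<n. d i * y' i)}
           \<le> min p_tilde (c / sqrt (real (card {i. i < n \<and> y i \<noteq> y' i}))))"
proof -
  have finP: "finite (set_pmf pD)" using assms(2,3) finite_subset by blast
  obtain a b where ab: "a \<in> set_pmf pD" "b \<in> set_pmf pD" "a \<noteq> b"
  proof -
    have "\<not> card (set_pmf pD) \<le> Suc 0" using assms(5) by simp
    then show ?thesis using that finP by (auto simp: card_le_Suc0_iff_eq)
  qed
  define r where "r = min (pmf pD a) (pmf pD b)"
  have r0: "0 < r" and r2: "r \<le> 1/2" and "\<exists>R. pD = bind_pmf (pair_pmf (bernoulli_pmf r) R) (qq a b)"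
    using mixture[OF ab finP] unfolding r_def by auto
  then obtain R where mix: "pD = bind_pmf (pair_pmf (bernoulli_pmf r) R) (qq a b)" by blast
  define Kd where "Kd = (\<Sum>x\<in>set_pmf pD. \<bar>x\<bar>)"
  define Yb where "Yb = (\<Sum>x\<in>Y. \<bar>x\<bar>)"
  define Kt where "Kt = Kd * Yb + 1"
  have Kd: "\<bar>x\<bar> \<le> Kd" if "x \<in> set_pmf pD" for x
    unfolding Kd_def using that finP by (intro member_le_sum) auto
  have Yb: "\<bar>x\<bar> \<le> Yb" if "x \<in> Y" for x
    unfolding Yb_def using that assms(1) by (intro member_le_sum) auto
  have Kd0: "0 \<le> Kd" unfolding Kd_def by (simp add: sum_nonneg)
  have Yb0: "0 \<le> Yb" unfolding Yb_def by (simp add: sum_nonneg)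
  have "0 \<le> Kd * Yb" using Kd0 Yb0 by (rule mult_nonneg_nonneg)
  then have Kt0: "Kt > 0" unfolding Kt_def by linarith
  have bdK: "\<bar>x * u\<bar> \<le> Kt" if "x \<in> set_pmf pD" "u \<in> Y" for x u
  proof -
    have "\<bar>x * u\<bar> = \<bar>x\<bar> * \<bar>u\<bar>" by (simp add: abs_mult)
    also have "\<dots> \<le> Kd * Yb" using Kd[OF that(1)] Yb[OF that(2)] by (intro mult_mono) auto
    finally show ?thesis unfolding Kt_def by simp
  qed
  define Zs where "Zs = (\<lambda>(u,v). u - v) ` {(u,v). u \<in> Y \<and> v \<in> Y \<and> u \<noteq> v}"
  have finZ: "finite Zs"
  proof -
    have "{(u,v). u \<in> Y \<and> v \<in> Y \<and> u \<noteq> v} \<subseteq> Y \<times> Y" by auto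
    then have "finite {(u,v). u \<in> Y \<and> v \<in> Y \<and> u \<noteq> v}"
      using assms(1) finite_subset by blast
    then show ?thesis unfolding Zs_def by simp
  qed
  have Z0: "0 \<notin> Zs" unfolding Zs_def by auto
  define \<delta> where "\<delta> = Min (insert 1 (abs ` Zs))"
  have \<delta>0: "\<delta> > 0" unfolding \<delta>_def using finZ Z0 by (auto simp: Min_gr_iff)
  have \<delta>le: "\<delta> \<le> \<bar>u\<bar>" if "u \<in> Zs" for u
    unfolding \<delta>_def using finZ that by (intro Min_le) auto
  define k where "k = card Zs"
  define c1 where "c1 = 2 / r^2 + sqrt (2 / r)"
  define T where "T n = 2 * exp (-2 * (real n powr (1/2+eps))^2 / (real n * (2*Kt)^2))" for n :: nat
  have lim1: "T \<longlonglongrightarrow> 0" unfolding T_def using assms(6) Kt0 by real_asymp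
  have lim2: "(\<lambda>n. sqrt (real n) * T n) \<longlonglongrightarrow> 0" unfolding T_def using assms(6) Kt0 by real_asymp
  have lim3: "(\<lambda>n. 2 * Q_step n eps) \<longlonglongrightarrow> 0" unfolding Q_step_def using assms(6) by real_asymp
  have gap0: "\<bar>b - a\<bar> * \<delta> > 0" using ab \<delta>0 by simp
  have "eventually (\<lambda>n. T n < r/16) sequentially"
    by (rule order_tendstoD(2)[OF lim1]) (use r0 in simp)
  moreover have "eventually (\<lambda>n. sqrt (real n) * T n < 1/2) sequentially"
    by (rule order_tendstoD(2)[OF lim2]) simp
  moreover have "eventually (\<lambda>n. 2 * Q_step n eps < \<bar>b - a\<bar> * \<delta>) sequentially"
    using order_tendstoD(2)[OF lim3 gap0] .
  moreover have "eventually (\<lambda>n. n > 0) sequentially" by (rule eventually_gt_at_top)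
  ultimately have "eventually (\<lambda>n. T n < r/16 \<and> sqrt (real n) * T n < 1/2 \<and>
        2 * Q_step n eps < \<bar>b - a\<bar> * \<delta> \<and> n > 0) sequentially"
    by eventually_elim auto
  then obtain N where N: "\<And>n. n \<ge> N \<Longrightarrow> T n < r/16 \<and> sqrt (real n) * T n < 1/2 \<and>
        2 * Q_step n eps < \<bar>b - a\<bar> * \<delta> \<and> n > 0"
    unfolding eventually_sequentially by blast
  show ?thesis
  proof (intro exI conjI allI impI)
    show "1 - r/8 < 1" using r0 by simp
  next
    fix n y y'
    assume n: "n \<ge> N" and Yy: "\<forall>i<n. y i \<in> Y \<and> y' i \<in> Y"
      and t1: "1 \<le> card {i. i < n \<and> y i \<noteq> y' i}"
    define Ts where "Ts = {i. i < n \<and> y i \<noteq> y' i}"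
    define t where "t = card Ts"
    define z where "z i = y i - y' i" for i
    define P where "P = Pi_pmf {..<n} 0 (\<lambda>_. pD)"
    define L where "L = Q_len n eps"
    define \<Delta> where "\<Delta> = Q_step n eps"
    have Nn: "T n < r/16" "sqrt (real n) * T n < 1/2" "2 * \<Delta> < \<bar>b - a\<bar> * \<delta>" "n > 0"
      using N[OF n] unfolding \<Delta>_def by auto
    have t1': "1 \<le> t" using t1 unfolding t_def Ts_def .
    have finTs: "finite Ts" unfolding Ts_def by simp
    have tn: "t \<le> n" unfolding t_def Ts_def
      using card_mono[of "{..<n}" "{i. i < n \<and> y i \<noteq> y' i}"] by auto
    have zZ: "z i \<in> Zs" if "i \<in> Ts" for i
      using that Yy unfolding Ts_def Zs_def z_def by (auto intro!: image_eqI[where x = "(y i, y' i)"])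
    obtain w where w: "w \<in> Zs" and wS: "t \<le> card {i\<in>Ts. z i = w} * k"
    proof (rule ccontr)
      note ob = that
      assume nt: "\<not> thesis"
      have lt: "card {i\<in>Ts. z i = w} * k < t" if "w \<in> Zs" for w
        using ob[of w] nt that by force
      have "Ts \<noteq> {}" using t1' unfolding t_def by auto
      then have Zne: "Zs \<noteq> {}" using zZ by auto
      have "Ts = (\<Union>w\<in>Zs. {i\<in>Ts. z i = w})" using zZ by auto
      then have "t = card (\<Union>w\<in>Zs. {i\<in>Ts. z i = w})" unfolding t_def by simp
      also have "\<dots> \<le> (\<Sum>w\<in>Zs. card {i\<in>Ts. z i = w})" by (rule card_UN_le[OF finZ])
      finally have "t \<le> (\<Sum>w\<in>Zs. card {i\<in>Ts. z i = w})" .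
      then have "t * k \<le> (\<Sum>w\<in>Zs. card {i\<in>Ts. z i = w}) * k"
        by (rule mult_right_mono) simp
      also have "\<dots> = (\<Sum>w\<in>Zs. card {i\<in>Ts. z i = w} * k)"
        by (rule sum_distrib_right)
      also have "\<dots> < (\<Sum>w\<in>Zs. t)"
        using lt finZ Zne by (intro sum_strict_mono) auto
      also have "\<dots> = t * k" unfolding k_def by simp
      finally show False by simp
    qed
    define S where "S = {i\<in>Ts. z i = w}"
    define m where "m = card S"
    have k1: "k \<ge> 1" using w finZ unfolding k_def by (auto simp: Suc_le_eq card_gt_0_iff)
    have m1: "m \<ge> 1"
    proof (rule ccontr)
      assume "\<not> m \<ge> 1" then have "m = 0" by simp
      then show False using wS t1' unfolding m_def S_def by simp
    qed
    have S: "S \<subseteq> {..<n}" unfolding S_def Ts_def by auto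
    have zS: "\<And>i. i \<in> S \<Longrightarrow> z i = w" unfolding S_def by auto
    have gap: "2 * \<Delta> \<le> \<bar>(b - a) * w\<bar>"
    proof -
      have "\<bar>b - a\<bar> * \<delta> \<le> \<bar>b - a\<bar> * \<bar>w\<bar>" using \<delta>le[OF w] by (intro mult_left_mono) auto
      then show ?thesis using Nn(3) by (simp add: abs_mult)
    qed
    have sub: "{d. Q n eps (\<Sum>i<n. d i * y i) = Q n eps (\<Sum>i<n. d i * y' i)}
       \<subseteq> {d. \<bar>\<Sum>i<n. d i * z i\<bar> < \<Delta>} \<union> {d. \<bar>\<Sum>i<n. d i * y i\<bar> \<ge> L} \<union> {d. \<bar>\<Sum>i<n. d i * y' i\<bar> \<ge> L}"
    proof
      fix d assume "d \<in> {d. Q n eps (\<Sum>i<n. d i * y i) = Q n eps (\<Sum>i<n. d i * y' i)}"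
      then have "\<bar>(\<Sum>i<n. d i * y i) - (\<Sum>i<n. d i * y' i)\<bar> < \<Delta> \<or> \<bar>\<Sum>i<n. d i * y i\<bar> \<ge> L \<or> \<bar>\<Sum>i<n. d i * y' i\<bar> \<ge> L"
        using Q_eq_imp[OF Nn(4)] unfolding \<Delta>_def L_def by blast
      moreover have "(\<Sum>i<n. d i * y i) - (\<Sum>i<n. d i * y' i) = (\<Sum>i<n. d i * z i)"
        unfolding z_def by (simp add: sum_subtractf right_diff_distrib)
      ultimately show "d \<in> {d. \<bar>\<Sum>i<n. d i * z i\<bar> < \<Delta>} \<union> {d. \<bar>\<Sum>i<n. d i * y i\<bar> \<ge> L} \<union> {d. \<bar>\<Sum>i<n. d i * y' i\<bar> \<ge> L}"
        by auto
    qed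
    have L0: "L \<ge> 0" unfolding L_def Q_len_def by simp
    have tail: "measure_pmf.prob P {d. \<bar>\<Sum>i<n. d i * u i\<bar> \<ge> L} \<le> T n"
      if "\<forall>i<n. u i \<in> Y" for u
    proof -
      have "measure_pmf.prob P {d. \<bar>\<Sum>i<n. d i * u i\<bar> \<ge> L} \<le> 2 * exp (-2 * L^2 / (n * (2*Kt)^2))"
        unfolding P_def by (rule tail_bound[OF Nn(4) Kt0 _ assms(4) L0]) (use bdK that in auto)
      then show ?thesis unfolding T_def L_def Q_len_def .
    qed
    have P1: "measure_pmf.prob P {d. \<bar>\<Sum>i<n. d i * z i\<bar> < \<Delta>}
          \<le> measure_pmf.expectation (binomial_pmf m r) (\<lambda>k. 1 / sqrt (real k + 1))"
      unfolding P_def m_def by (rule anti_conc[OF mix _ _ S zS gap]) (use r0 r2 in auto)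
    have Pall: "measure_pmf.prob P {d. Q n eps (\<Sum>i<n. d i * y i) = Q n eps (\<Sum>i<n. d i * y' i)}
        \<le> measure_pmf.expectation (binomial_pmf m r) (\<lambda>k. 1 / sqrt (real k + 1)) + 2 * T n"
    proof -
      have "measure_pmf.prob P {d. Q n eps (\<Sum>i<n. d i * y i) = Q n eps (\<Sum>i<n. d i * y' i)}
         \<le> measure_pmf.prob P ({d. \<bar>\<Sum>i<n. d i * z i\<bar> < \<Delta>} \<union> {d. \<bar>\<Sum>i<n. d i * y i\<bar> \<ge> L} \<union> {d. \<bar>\<Sum>i<n. d i * y' i\<bar> \<ge> L})"
        using sub by (rule measure_pmf.finite_measure_mono) simp
      also have "\<dots> \<le> measure_pmf.prob P ({d. \<bar>\<Sum>i<n. d i * z i\<bar> < \<Delta>} \<union> {d. \<bar>\<Sum>i<n. d i * y i\<bar> \<ge> L})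
                     + measure_pmf.prob P {d. \<bar>\<Sum>i<n. d i * y' i\<bar> \<ge> L}"
        by (rule measure_Un_le) simp_all
      also have "measure_pmf.prob P ({d. \<bar>\<Sum>i<n. d i * z i\<bar> < \<Delta>} \<union> {d. \<bar>\<Sum>i<n. d i * y i\<bar> \<ge> L})
                 \<le> measure_pmf.prob P {d. \<bar>\<Sum>i<n. d i * z i\<bar> < \<Delta>} + measure_pmf.prob P {d. \<bar>\<Sum>i<n. d i * y i\<bar> \<ge> L}"
        by (rule measure_Un_le) simp_all
      finally show ?thesis using P1 tail[of y] tail[of y'] Yy by auto
    qed
    define E where "E = measure_pmf.expectation (binomial_pmf m r) (\<lambda>k. 1 / sqrt (real k + 1))"
    have E1: "E \<le> 1 - r/4" unfolding E_def by (rule binom_exp1[OF r0 r2 m1])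
    have E2: "E \<le> c1 / sqrt m" unfolding E_def c1_def by (rule binom_exp2[OF r0 r2 m1])
    have tpos: "sqrt (real t) > 0" using t1' by simp
    have msq: "c1 / sqrt m \<le> c1 * sqrt k / sqrt t"
    proof -
      have "real t \<le> real m * real k" using wS unfolding m_def S_def by (metis of_nat_le_iff of_nat_mult)
      then have "sqrt t \<le> sqrt m * sqrt k" by (metis real_sqrt_le_mono real_sqrt_mult)
      moreover have "c1 \<ge> 0" unfolding c1_def using r0 by (intro add_nonneg_nonneg) auto
      moreover have "sqrt m > 0" using m1 by simp
      ultimately show ?thesis using tpos by (simp add: field_simps mult_left_mono)
    qed
    have Tn1: "2 * T n \<le> 1 / sqrt t"
    proof -
      have "sqrt t \<le> sqrt n" using tn by simp
      moreover have "T n \<ge> 0" unfolding T_def by simp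
      ultimately have "sqrt t * T n \<le> sqrt n * T n" by (intro mult_right_mono) auto
      then have "sqrt t * (2 * T n) \<le> 1" using Nn(2) by linarith
      then show ?thesis using tpos by (simp add: field_simps)
    qed
    show "measure_pmf.prob (Pi_pmf {..<n} 0 (\<lambda>_. pD))
             {d. Q n eps (\<Sum>i<n. d i * y i) = Q n eps (\<Sum>i<n. d i * y' i)}
           \<le> min (1 - r/8) ((c1 * sqrt k + 1) / sqrt (real (card {i. i < n \<and> y i \<noteq> y' i})))"
    proof -
      have "measure_pmf.prob P {d. Q n eps (\<Sum>i<n. d i * y i) = Q n eps (\<Sum>i<n. d i * y' i)} \<le> 1 - r/8"
        using Pall E1 Nn(1) unfolding E_def by linarith
      moreover have "measure_pmf.prob P {d. Q n eps (\<Sum>i<n. d i * y i) = Q n eps (\<Sum>i<n. d i * y' i)}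
           \<le> (c1 * sqrt k + 1) / sqrt t"
      proof -
        have "(c1 * sqrt k + 1) / sqrt t = c1 * sqrt k / sqrt t + 1 / sqrt t" by (simp add: add_divide_distrib)
        then show ?thesis using Pall E2 msq Tn1 unfolding E_def by linarith
      qed
      ultimately show ?thesis unfolding P_def t_def Ts_def by simp
    qed
  qed
qed

end
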